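(* Let $(X,Y,Z,W)$ be a solution of system (S) on $(-\infty,t_{max})$. Assume $Y,W>0$, $\lim_{t\to-\infty}(X,Y,Z,W)(t)=(0,0,1,0)$, and $\mathcal C>0$. Then $dX(t)+Z(t)\le1$ for all $t\in(-\infty,t_{max})$.
   Context: Fix a positive integer $d$ and $q\in\mathbb R$. Put $A_2=d(d+2)$ and $A_3=\tfrac14d(d+2)^2q^2$. System (S) is $$X'=X(dX^2+Z^2-1)+\tfrac{A_2}{d}Y^2-2\tfrac{A_3}{d}W^2,\qquad Y'=Y(dX^2+Z^2-X),$$ $$Z'=Z(dX^2+Z^2-1)+A_3W^2,\qquad W'=W(dX^2+Z^2-2X+Z).$$ $g$ is a positive solution of $g'=gX$ and $\mathcal L=gY$. The first integral is $dX^2+A_2Y^2+Z^2-A_3W^2=1-\mathcal C\mathcal L^2$ with $\mathcal C$ constant; its sign does not depend on the normalization of $g$. *)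

theory Defs
  imports "HOL-Analysis.Analysis" "HOL-Library.Extended_Real"
begin

definition A2 :: "nat \<Rightarrow> real" where
  "A2 d = real d * (real d + 2)"

definition A3 :: "nat \<Rightarrow> real \<Rightarrow> real" where
  "A3 d q = (1/4) * real d * (real d + 2)^2 * q^2"

definition solves_S :: "nat \<Rightarrow> real \<Rightarrow> real set \<Rightarrow> (real \<Rightarrow> real) \<Rightarrow> (real \<Rightarrow> real)
    \<Rightarrow> (real \<Rightarrow> real) \<Rightarrow> (real \<Rightarrow> real) \<Rightarrow> bool" where
  "solves_S d q I X Y Z W \<longleftrightarrow> (\<forall>t\<in>I.
     (X has_real_derivative
        (X t * (real d * (X t)^2 + (Z t)^2 - 1) + A2 d / real d * (Y t)^2
         - 2 * A3 d q / real d * (W t)^2)) (at t) \<and>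
     (Y has_real_derivative (Y t * (real d * (X t)^2 + (Z t)^2 - X t))) (at t) \<and>
     (Z has_real_derivative
        (Z t * (real d * (X t)^2 + (Z t)^2 - 1) + A3 d q * (W t)^2)) (at t) \<and>
     (W has_real_derivative
        (W t * (real d * (X t)^2 + (Z t)^2 - 2 * X t + Z t))) (at t))"

end

theory Submission
  imports Defs
begin

lemma stays_nonpos:
  fixes \<phi> :: "real \<Rightarrow> real"
  assumes st: "s \<le> t"
    and der: "\<forall>x\<in>{s..t}. \<exists>D. DERIV \<phi> x :> D \<and> (\<phi> x = 0 \<longrightarrow> D < 0)"
    and s0: "\<phi> s \<le> 0"
  shows "\<phi> t \<le> 0"
proof (rule ccontr)
  assume "\<not> \<phi> t \<le> 0" hence tpos: "\<phi> t > 0" by simp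
  have cont: "continuous_on {s..t} \<phi>"
    by (metis DERIV_isCont continuous_at_imp_continuous_on der)
  define S where "S = {x\<in>{s..t}. \<phi> x \<le> (\<lambda>_. 0) x}"
  have cS: "closed S" unfolding S_def
    by (rule continuous_on_closed_Collect_le[OF cont]) (auto intro: continuous_on_const)
  have "s \<in> S" using st s0 by (simp add: S_def)
  hence ne: "S \<noteq> {}" by auto
  have bd: "bdd_above S" unfolding S_def by (rule bdd_aboveI[of _ t]) auto
  define u where "u = Sup S"
  have uS: "u \<in> S" using closed_contains_Sup[OF ne bd cS] u_def by simp
  have ut: "u < t" using uS tpos by (cases "u = t") (auto simp: S_def)
  have su: "s \<le> u" using uS by (auto simp: S_def)
  have after: "\<phi> x > 0" if "u < x" "x \<le> t" for x
  proof (rule ccontr)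
    assume "\<not> \<phi> x > 0"
    hence "x \<in> S" using that su by (auto simp: S_def)
    hence "x \<le> u" unfolding u_def using bd by (rule cSup_upper)
    thus False using that by simp
  qed
  have u0: "\<phi> u = 0"
  proof (rule ccontr)
    assume "\<phi> u \<noteq> 0"
    hence "\<phi> u < 0" using uS by (auto simp: S_def)
    moreover have "continuous_on {u..t} \<phi>" using su by (intro continuous_on_subset[OF cont]) auto
    ultimately obtain z where "u \<le> z" "z \<le> t" "\<phi> z = 0"
      using IVT'[of \<phi> u 0 t] tpos ut by auto
    thus False using after[of z] \<open>\<phi> u < 0\<close> by (cases "z = u") auto
  qed
  obtain D where D: "DERIV \<phi> u :> D" "\<phi> u = 0 \<longrightarrow> D < 0" using der[rule_format, of u] su ut by auto
  obtain e where e: "e > 0" "\<forall>h>0. h < e \<longrightarrow> \<phi> u > \<phi> (u + h)"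
    using DERIV_neg_dec_right[OF D(1)] D(2) u0 by auto
  define h where "h = min (e/2) (t - u)"
  have "h > 0" "h < e" "u + h \<le> t" using e ut by (auto simp: h_def)
  hence "\<phi> (u+h) < 0" "\<phi> (u+h) > 0" using e u0 after[of "u+h"] by auto
  thus False by simp
qed


theorem proposition5p2:
  fixes d :: nat and q :: real and tmax :: ereal
    and X Y Z W g :: "real \<Rightarrow> real" and C :: real
  assumes d_pos: "d > 0"
    and sol: "solves_S d q {t. ereal t < tmax} X Y Z W"
    and Y_pos: "\<forall>t. ereal t < tmax \<longrightarrow> Y t > 0"
    and W_pos: "\<forall>t. ereal t < tmax \<longrightarrow> W t > 0"
    and limX: "(X \<longlongrightarrow> 0) at_bot"
    and limY: "(Y \<longlongrightarrow> 0) at_bot"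
    and limZ: "(Z \<longlongrightarrow> 1) at_bot"
    and limW: "(W \<longlongrightarrow> 0) at_bot"
    and g_pos: "\<forall>t. ereal t < tmax \<longrightarrow> g t > 0"
    and g_deriv: "\<forall>t. ereal t < tmax \<longrightarrow> (g has_real_derivative (g t * X t)) (at t)"
    and first_integral: "\<forall>t. ereal t < tmax \<longrightarrow>
       real d * (X t)^2 + A2 d * (Y t)^2 + (Z t)^2 - A3 d q * (W t)^2
         = 1 - C * (g t * Y t)^2"
    and C_pos: "C > 0"
  shows "\<forall>t. ereal t < tmax \<longrightarrow> real d * X t + Z t \<le> 1"

proof -
  let ?D = "{t. ereal t < tmax}"
  define F where "F x = real d * X x + Z x - 1" for x
  define Q where "Q x = real d * (X x)^2 + (Z x)^2" for x
  define r where "r x = Q x - 2 * X x + Z x" for x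
  define \<psi> where "\<psi> x = exp (- A3 d q * (W x)^2 / 2)" for x
  define G where "G x = F x * \<psi> x" for x
  have dpos: "real d > 0" using d_pos by simp
  have A2pos: "A2 d > 0" using dpos by (simp add: A2_def)
  have A3nn: "A3 d q \<ge> 0" by (simp add: A3_def)
  have Qm1: "Q x - 1 = A3 d q * (W x)^2 - A2 d * (Y x)^2 - C * (g x * Y x)^2" if "ereal x < tmax" for x
    using first_integral that by (auto simp: Q_def algebra_simps)
  have Lpos: "C * (g x * Y x)^2 > 0" if "ereal x < tmax" for x
    using that g_pos Y_pos C_pos by (simp add: power2_eq_square)
  have Fder: "(F has_real_derivative (F x * (Q x - 1) - C * (g x * Y x)^2)) (at x)"
    if x: "ereal x < tmax" for x
  proof -
    have dX: "(X has_real_derivative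
        (X x * (real d * (X x)^2 + (Z x)^2 - 1) + A2 d / real d * (Y x)^2
         - 2 * A3 d q / real d * (W x)^2)) (at x)"
      and dZ: "(Z has_real_derivative
        (Z x * (real d * (X x)^2 + (Z x)^2 - 1) + A3 d q * (W x)^2)) (at x)"
      using sol x unfolding solves_S_def by auto
    have "(F has_real_derivative (real d * (X x * (real d * (X x)^2 + (Z x)^2 - 1) + A2 d / real d * (Y x)^2
         - 2 * A3 d q / real d * (W x)^2) + (Z x * (real d * (X x)^2 + (Z x)^2 - 1) + A3 d q * (W x)^2) - 0)) (at x)"
      unfolding F_def[abs_def]
      by (intro DERIV_diff DERIV_add DERIV_cmult dX dZ DERIV_const)
    moreover have "real d * (X x * (real d * (X x)^2 + (Z x)^2 - 1) + A2 d / real d * (Y x)^2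
         - 2 * A3 d q / real d * (W x)^2) + (Z x * (real d * (X x)^2 + (Z x)^2 - 1) + A3 d q * (W x)^2) - 0
       = F x * (Q x - 1) - C * (g x * Y x)^2"
    proof -
      have e: "real d * (A2 d / real d) = A2 d" "real d * (2 * A3 d q / real d) = 2 * A3 d q"
        using dpos by auto
      show ?thesis using Qm1[OF x] first_integral x d_pos
        by (simp add: F_def Q_def algebra_simps e power2_eq_square)
    qed
    ultimately show ?thesis by simp
  qed
  have claimA: "F t \<le> 0" if "ereal t < tmax" "s \<le> t" "F s \<le> 0" for s t
  proof (rule stays_nonpos[where \<phi>=F, OF that(2) _ that(3)])
    show "\<forall>x\<in>{s..t}. \<exists>D. DERIV F x :> D \<and> (F x = 0 \<longrightarrow> D < 0)"
    proof
      fix x assume "x \<in> {s..t}"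
      hence "ereal x \<le> ereal t" by simp
      hence x: "ereal x < tmax" using that(1) by (rule le_less_trans)
      show "\<exists>D. DERIV F x :> D \<and> (F x = 0 \<longrightarrow> D < 0)"
        using Fder[OF x] Lpos[OF x] by auto
    qed
  qed
  show ?thesis
  proof (cases "tmax = -\<infinity>")
    case True thus ?thesis by simp
  next
    case False
    have ev1: "eventually (\<lambda>x. ereal x < tmax) at_bot"
    proof -
      obtain b where "ereal b < tmax" using False
        by (metis ereal_MInfty_lessI ereal_dense2 ereal_less_eq(2) less_le_trans order.not_eq_order_implies_strict)
      thus ?thesis unfolding eventually_at_bot_linorder
        by (intro exI[of _ b]) (auto intro: le_less_trans[of "ereal _" "ereal b"])
    qed
    have "((\<lambda>x. r x) \<longlongrightarrow> real d * 0^2 + 1^2 - 2 * 0 + 1) at_bot"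
      unfolding r_def Q_def
      by (intro tendsto_intros limX limZ)
    hence "eventually (\<lambda>x. r x > 1) at_bot"
      by (rule order_tendstoD) simp
    with ev1 have "eventually (\<lambda>x. ereal x < tmax \<and> r x > 1) at_bot"
      by (rule eventually_conj)
    then obtain N where N: "\<And>x. x \<le> N \<Longrightarrow> ereal x < tmax \<and> r x > 1"
      unfolding eventually_at_bot_linorder by blast
    have Glim: "(G \<longlongrightarrow> 0) at_bot"
    proof -
      have "(G \<longlongrightarrow> (real d * 0 + 1 - 1) * exp (- A3 d q * 0^2 / 2)) at_bot"
        unfolding G_def[abs_def] F_def \<psi>_def by (intro tendsto_intros limX limZ limW) simp
      thus ?thesis by simp
    qed
    have claimB: "F t0 \<le> 0" if t0: "t0 \<le> N" for t0
    proof (rule ccontr)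
      assume "\<not> F t0 \<le> 0"
      hence Ft0: "F t0 > 0" by simp
      have Fpos: "F x > 0" if "x \<le> t0" for x
        using claimA[of t0 x] N t0 that Ft0 by fastforce
      have Gdec: "G x > G t0" if "x < t0" for x
      proof (rule DERIV_neg_imp_decreasing[OF that])
        fix y assume y: "x \<le> y" "y \<le> t0"
        have yd: "ereal y < tmax" "r y > 1" using N y t0 by auto
        have dW: "(W has_real_derivative (W y * (real d * (X y)^2 + (Z y)^2 - 2 * X y + Z y))) (at y)"
          using sol yd unfolding solves_S_def by auto
        have dW': "(W has_real_derivative (W y * r y)) (at y)" using dW by (simp add: r_def Q_def)
        have d\<psi>: "(\<psi> has_real_derivative (\<psi> y * (- A3 d q * (W y)^2 * r y))) (at y)"
          unfolding \<psi>_def[abs_def]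
          by (auto intro!: derivative_eq_intros dW' simp: power2_eq_square algebra_simps)
        have dG: "(G has_real_derivative (F y * (Q y - 1) - C * (g y * Y y)^2) * \<psi> y
                + F y * (\<psi> y * (- A3 d q * (W y)^2 * r y))) (at y)"
          unfolding G_def[abs_def] using DERIV_mult'[OF Fder[OF yd(1)] d\<psi>] by (simp add: algebra_simps)
        have Fy: "F y > 0" using Fpos y by auto
        have psi: "\<psi> y > 0" by (simp add: \<psi>_def)
        have "(F y * (Q y - 1) - C * (g y * Y y)^2) * \<psi> y
                + F y * (\<psi> y * (- A3 d q * (W y)^2 * r y))
             = \<psi> y * (F y * (A3 d q * (W y)^2 * (1 - r y) - A2 d * (Y y)^2 - C * (g y * Y y)^2)
                 - C * (g y * Y y)^2)"
          proof -
            have qe: "Q y = 1 + A3 d q * (W y)^2 - A2 d * (Y y)^2 - C * (g y * Y y)^2"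
              using Qm1[OF yd(1)] by simp
            show ?thesis by (simp add: qe algebra_simps power2_eq_square)
          qed
        also have "\<dots> < 0"
        proof -
          have a: "A3 d q * (W y)^2 * (1 - r y) \<le> 0"
            using A3nn yd(2) by (simp add: mult_nonneg_nonpos)
          have b: "A2 d * (Y y)^2 \<ge> 0" using A2pos by simp
          have "F y * (A3 d q * (W y)^2 * (1 - r y) - A2 d * (Y y)^2 - C * (g y * Y y)^2) \<le> 0"
            using a b Lpos[OF yd(1)] Fy by (intro mult_nonneg_nonpos) auto
          hence "F y * (A3 d q * (W y)^2 * (1 - r y) - A2 d * (Y y)^2 - C * (g y * Y y)^2)
                 - C * (g y * Y y)^2 < 0" using Lpos[OF yd(1)] by linarith
          thus ?thesis using psi by (simp add: mult_pos_neg)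
        qed
        finally show "\<exists>D. DERIV G y :> D \<and> D < 0" using dG by blast
      qed
      have "eventually (\<lambda>x. G t0 \<le> G x) at_bot"
        unfolding eventually_at_bot_linorder
        by (intro exI[of _ "t0 - 1"]) (auto intro!: less_imp_le Gdec)
      hence "G t0 \<le> 0" using Glim by (intro tendsto_le[OF _ Glim tendsto_const]) auto
      moreover have "G t0 > 0" using Ft0 by (simp add: G_def \<psi>_def)
      ultimately show False by simp
    qed
    show ?thesis
    proof (intro allI impI)
      fix t assume t: "ereal t < tmax"
      have "F (min t N) \<le> 0" by (rule claimB) simp
      hence "F t \<le> 0" using claimA[OF t, of "min t N"] by simp
      thus "real d * X t + Z t \<le> 1" by (simp add: F_def)
    qed
  qed
qed

end
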